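(* For $\phi\in L^\infty$, the operator $V_\phi$ is a Hilbert–Schmidt operator on $H^2$ if and only if $\phi=0$.
   Context: $L^2=L^2(\mathbb{T})$ with orthonormal basis $e_n(z)=z^n$, $n\in\mathbb{Z}$; $H^2$ is the closed span of $\{e_n\}_{n\ge0}$, $P:L^2\to H^2$ the orthogonal projection, $M_\phi$ multiplication by $\phi$. $W:L^2\to L^2$: $We_n=e_{n/2}$ for $n$ even, $0$ for $n$ odd. $K:H^2\to L^2$: $Ke_{2n}=e_n$, $Ke_{2n+1}=e_{-n-1}$ ($n\ge0$). The slant H-Toeplitz operator is $V_\phi=WPM_\phi K:H^2\to H^2$. *)

theory Defs
  imports "HOL-Analysis.Analysis"
begin

text \<open>A function on the unit circle T is represented as phi :: complex => complex, only its
values on T matter, evaluated through t |-> phi (cis t), t in [0, 2 pi], with normalised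
Lebesgue measure.  Elements of L2(T) are represented by their Fourier coefficient sequences
(int => complex) via the Plancherel isometry; e_n is the n-th unit sequence.\<close>

definition in_Linfty :: "(complex \<Rightarrow> complex) \<Rightarrow> bool" where
  "in_Linfty \<phi> \<longleftrightarrow> (\<lambda>t. \<phi> (cis t)) \<in> borel_measurable lborel \<and>
     (\<exists>C. AE t in lborel. t \<in> {0..2*pi} \<longrightarrow> norm (\<phi> (cis t)) \<le> C)"

definition Linfty_zero :: "(complex \<Rightarrow> complex) \<Rightarrow> bool" where
  "Linfty_zero \<phi> \<longleftrightarrow> (AE t in lborel. t \<in> {0..2*pi} \<longrightarrow> \<phi> (cis t) = 0)"

definition fourier_coeff :: "(complex \<Rightarrow> complex) \<Rightarrow> int \<Rightarrow> complex" where
  "fourier_coeff \<phi> k =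
     (LINT t:{0..2*pi}|lborel. \<phi> (cis t) * cis (- (of_int k * t))) / (2 * pi)"

definition basis_e :: "int \<Rightarrow> (int \<Rightarrow> complex)" where
  "basis_e n = (\<lambda>j. if j = n then 1 else 0)"

definition mult_op :: "(complex \<Rightarrow> complex) \<Rightarrow> (int \<Rightarrow> complex) \<Rightarrow> (int \<Rightarrow> complex)" where
  "mult_op \<phi> f = (\<lambda>n. \<Sum>\<^sub>\<infinity>k\<in>UNIV. fourier_coeff \<phi> (n - k) * f k)"

definition proj_H2 :: "(int \<Rightarrow> complex) \<Rightarrow> (int \<Rightarrow> complex)" where
  "proj_H2 f = (\<lambda>n. if n \<ge> 0 then f n else 0)"

text \<open>W e_n = e_(n/2) for n even, 0 for n odd.\<close>
definition W_op :: "(int \<Rightarrow> complex) \<Rightarrow> (int \<Rightarrow> complex)" where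
  "W_op f = (\<lambda>n. f (2 * n))"

text \<open>K e_(2n) = e_n, K e_(2n+1) = e_(-n-1), n >= 0.\<close>
definition K_op :: "(int \<Rightarrow> complex) \<Rightarrow> (int \<Rightarrow> complex)" where
  "K_op f = (\<lambda>n. if n \<ge> 0 then f (2 * n) else f (- 2 * n - 1))"

definition slant_HToeplitz :: "(complex \<Rightarrow> complex) \<Rightarrow> (int \<Rightarrow> complex) \<Rightarrow> (int \<Rightarrow> complex)" where
  "slant_HToeplitz \<phi> = W_op \<circ> proj_H2 \<circ> mult_op \<phi> \<circ> K_op"

definition hilbert_schmidt_H2 :: "((int \<Rightarrow> complex) \<Rightarrow> (int \<Rightarrow> complex)) \<Rightarrow> bool" where
  "hilbert_schmidt_H2 T \<longleftrightarrow>
     (\<lambda>(m, n). (norm (T (basis_e m) n))\<^sup>2) summable_on ({0..} \<times> UNIV)"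

end

theory Submission
  imports Defs
begin


definition sig :: "int \<Rightarrow> int" where
  "sig m = (if even m then m div 2 else - ((m + 1) div 2))"
definition tau :: "int \<Rightarrow> int" where
  "tau k = (if k \<ge> 0 then 2 * k else - 2 * k - 1)"

lemma sig_tau: "sig (tau k) = k"
  unfolding sig_def tau_def by auto

lemma tau_nonneg: "tau k \<ge> 0" unfolding tau_def by auto

lemma K_basis: "m \<ge> 0 \<Longrightarrow> K_op (basis_e m) = basis_e (sig m)"
  unfolding K_op_def basis_e_def sig_def by (rule ext) (auto, presburger+)

lemma mult_basis: "mult_op \<phi> (basis_e j) = (\<lambda>n. fourier_coeff \<phi> (n - j))"
proof
  fix n
  have "(\<Sum>\<^sub>\<infinity>k\<in>UNIV. fourier_coeff \<phi> (n - k) * basis_e j k) = (\<Sum>\<^sub>\<infinity>k\<in>{j}. fourier_coeff \<phi> (n - k) * basis_e j k)"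
    by (rule infsum_cong_neutral) (auto simp: basis_e_def)
  then show "mult_op \<phi> (basis_e j) n = fourier_coeff \<phi> (n - j)"
    by (simp add: mult_op_def basis_e_def)
qed

lemma V_basis: "m \<ge> 0 \<Longrightarrow> slant_HToeplitz \<phi> (basis_e m) n = (if n \<ge> 0 then fourier_coeff \<phi> (2*n - sig m) else 0)"
  by (simp add: slant_HToeplitz_def K_basis mult_basis W_op_def proj_H2_def)

lemma HS_iff_coeff: "hilbert_schmidt_H2 (slant_HToeplitz \<phi>) \<longleftrightarrow> (\<forall>j. fourier_coeff \<phi> j = 0)"
proof
  assume "\<forall>j. fourier_coeff \<phi> j = 0"
  then show "hilbert_schmidt_H2 (slant_HToeplitz \<phi>)"
    unfolding hilbert_schmidt_H2_def
    by (subst summable_on_cong[where g="\<lambda>_. 0"]) (auto simp: V_basis)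
next
  assume hs: "hilbert_schmidt_H2 (slant_HToeplitz \<phi>)"
  show "\<forall>j. fourier_coeff \<phi> j = 0"
  proof (rule ccontr)
    assume "\<not> (\<forall>j. fourier_coeff \<phi> j = 0)"
    then obtain j where j: "fourier_coeff \<phi> j \<noteq> 0" by auto
    let ?f = "\<lambda>(m, n). (norm (slant_HToeplitz \<phi> (basis_e m) n))\<^sup>2"
    let ?h = "\<lambda>n::int. (tau (2*n - j), n)"
    have sub: "?h ` {0..} \<subseteq> {0..} \<times> UNIV" using tau_nonneg by auto
    have "?f summable_on (?h ` {0..})"
      using hs unfolding hilbert_schmidt_H2_def
      by (rule summable_on_subset_banach[OF _ sub])
    moreover have "inj_on ?h {0..}" by (auto simp: inj_on_def)
    ultimately have "(?f \<circ> ?h) summable_on {0..}"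
      using summable_on_reindex by blast
    moreover have "(?f \<circ> ?h) = (\<lambda>n. if n \<ge> 0 then (norm (fourier_coeff \<phi> j))\<^sup>2 else 0)"
      by (rule ext) (simp add: V_basis tau_nonneg sig_tau)
    ultimately have "(\<lambda>_. (norm (fourier_coeff \<phi> j))\<^sup>2) summable_on {0::int..}"
      by (subst summable_on_cong[where g="\<lambda>n. if n \<ge> 0 then (norm (fourier_coeff \<phi> j))\<^sup>2 else 0"]) auto
    moreover have "infinite {0::int..}"
      using infinite_Ici by blast
    moreover have "(norm (fourier_coeff \<phi> j))\<^sup>2 \<noteq> 0" using j by simp
    ultimately show False using infsum_diverge_constant by blast
  qed
qed


definition FF :: "(complex \<Rightarrow> complex) \<Rightarrow> real \<Rightarrow> complex" where
  "FF \<phi> t = indicat_real {0..2*pi} t *\<^sub>R \<phi> (cis t)"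

lemma FF_meas: "in_Linfty \<phi> \<Longrightarrow> FF \<phi> \<in> borel_measurable lborel"
  unfolding FF_def in_Linfty_def by measurable auto

lemma FF_int: assumes "in_Linfty \<phi>" shows "integrable lborel (FF \<phi>)"
proof -
  obtain C where C: "AE t in lborel. t \<in> {0..2*pi} \<longrightarrow> norm (\<phi> (cis t)) \<le> C"
    using assms unfolding in_Linfty_def by auto
  have I: "integrable lborel (\<lambda>t. indicat_real {0..2*pi} t * C)"
    by (intro integrable_mult_left integrable_real_indicator) auto
  show ?thesis
  proof (rule Bochner_Integration.integrable_bound[OF I])
    show "FF \<phi> \<in> borel_measurable lborel" using FF_meas[OF assms] .
    show "AE x in lborel. norm (FF \<phi> x) \<le> norm (indicat_real {0..2*pi} x * C)"
      using C by eventually_elim (auto simp: FF_def indicator_def)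
  qed
qed

lemma int_mult_bdd:
  fixes F g :: "real \<Rightarrow> complex"
  assumes "integrable lborel F" "g \<in> borel_measurable borel" "\<And>t. norm (g t) \<le> B"
  shows "integrable lborel (\<lambda>t. F t * g t)"
proof -
  have I: "integrable lborel (\<lambda>t. B * norm (F t))"
    using assms(1) by (intro integrable_mult_right integrable_norm)
  show ?thesis
  proof (rule Bochner_Integration.integrable_bound[OF I])
    show "(\<lambda>t. F t * g t) \<in> borel_measurable lborel"
      using assms(1,2) by measurable
    have "norm (F t * g t) \<le> norm (B * norm (F t))" for t
    proof -
      have "norm (F t * g t) = norm (F t) * norm (g t)" by (simp add: norm_mult)
      also have "\<dots> \<le> norm (F t) * B" by (intro mult_left_mono assms(3)) auto
      also have "\<dots> \<le> norm (B * norm (F t))" by (simp add: abs_mult mult.commute mult_right_mono)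
      finally show ?thesis .
    qed
    then show "AE x in lborel. norm (F x * g x) \<le> norm (B * norm (F x))" by auto
  qed
qed

lemma cis_meas[measurable]: "(\<lambda>t. cis (c * t)) \<in> borel_measurable borel"
  by (intro borel_measurable_continuous_onI continuous_intros)

lemma FF_cis_int: "in_Linfty \<phi> \<Longrightarrow> integrable lborel (\<lambda>t. FF \<phi> t * cis (c * t))"
  by (rule int_mult_bdd[OF FF_int, where B=1]) auto

lemma coeff_zero_int:
  assumes "\<forall>j. fourier_coeff \<phi> j = 0"
  shows "(\<integral>t. FF \<phi> t * cis (of_int k * t) \<partial>lborel) = 0"
proof -
  have "fourier_coeff \<phi> (-k) = 0" using assms by auto
  then have "(LINT t:{0..2*pi}|lborel. \<phi> (cis t) * cis (- (of_int (-k) * t))) = 0"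
    unfolding fourier_coeff_def by simp
  moreover have "(\<lambda>t. indicat_real {0..2*pi} t *\<^sub>R (\<phi> (cis t) * cis (- (of_int (-k) * t)))) = (\<lambda>t. FF \<phi> t * cis (of_int k * t))"
    by (rule ext) (simp add: FF_def)
  ultimately show ?thesis unfolding set_lebesgue_integral_def by simp
qed

lemma zero_coeff:
  assumes "Linfty_zero \<phi>"
  shows "fourier_coeff \<phi> k = 0"
proof -
  have "(LINT t:{0..2*pi}|lborel. \<phi> (cis t) * cis (- (of_int k * t))) = 0"
    unfolding set_lebesgue_integral_def
    by (rule integral_eq_zero_AE) (use assms in \<open>auto simp: Linfty_zero_def indicator_def elim!: AE_mp\<close>)
  then show ?thesis by (simp add: fourier_coeff_def)
qed



definition ev :: "(complex \<times> int) list \<Rightarrow> real \<Rightarrow> complex" where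
  "ev xs t = (\<Sum>(a,k)\<leftarrow>xs. a * cis (of_int k * t))"

definition prodl :: "(complex \<times> int) list \<Rightarrow> (complex \<times> int) list \<Rightarrow> (complex \<times> int) list" where
  "prodl xs ys = concat (map (\<lambda>(a,k). map (\<lambda>(b,l). (a*b, k+l)) ys) xs)"

lemma ev_Nil[simp]: "ev [] t = 0" by (simp add: ev_def)
lemma ev_Cons[simp]: "ev ((a,k)#xs) t = a * cis (of_int k * t) + ev xs t" by (simp add: ev_def)
lemma ev_append[simp]: "ev (xs @ ys) t = ev xs t + ev ys t" by (simp add: ev_def)

lemma ev_map: "ev (map (\<lambda>(b,l). (a*b, k+l)) ys) t = a * cis (of_int k * t) * ev ys t"
proof (induction ys)
  case Nil then show ?case by simp
next
  case (Cons y ys)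
  obtain b l where y: "y = (b,l)" by fastforce
  have "cis (of_int (k + l) * t) = cis (of_int k * t) * cis (of_int l * t)"
    by (simp add: cis_mult distrib_right)
  then show ?case using Cons y by (simp add: algebra_simps)
qed

lemma ev_prodl: "ev (prodl xs ys) t = ev xs t * ev ys t"
proof (induction xs)
  case Nil then show ?case by (simp add: prodl_def)
next
  case (Cons x xs)
  obtain a k where x: "x = (a,k)" by fastforce
  have "prodl (x#xs) ys = map (\<lambda>(b,l). (a*b, k+l)) ys @ prodl xs ys"
    by (simp add: prodl_def x)
  then have "ev (prodl (x#xs) ys) t = a * cis (of_int k * t) * ev ys t + ev (prodl xs ys) t"
    by (simp only: ev_append ev_map)
  then show ?case using Cons by (simp add: x algebra_simps)
qed

definition tp :: "(real \<Rightarrow> complex) \<Rightarrow> bool" where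
  "tp h \<longleftrightarrow> (\<exists>xs. h = ev xs)"

lemma tp_const: "tp (\<lambda>t. c)"
  unfolding tp_def by (rule exI[of _ "[(c,0)]"]) (auto simp: fun_eq_iff)

lemma tp_add: "tp f \<Longrightarrow> tp g \<Longrightarrow> tp (\<lambda>t. f t + g t)"
proof -
  assume "tp f" "tp g"
  then obtain xs ys where "f = ev xs" "g = ev ys" unfolding tp_def by blast
  then have "(\<lambda>t. f t + g t) = ev (xs @ ys)" by (simp add: fun_eq_iff)
  then show ?thesis unfolding tp_def by blast
qed

lemma tp_mult: "tp f \<Longrightarrow> tp g \<Longrightarrow> tp (\<lambda>t. f t * g t)"
proof -
  assume "tp f" "tp g"
  then obtain xs ys where "f = ev xs" "g = ev ys" unfolding tp_def by blast
  then have "(\<lambda>t. f t * g t) = ev (prodl xs ys)" by (simp add: fun_eq_iff ev_prodl)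
  then show ?thesis unfolding tp_def by blast
qed

lemma tp_lin:
  fixes A B :: complex
  shows "tp (\<lambda>t. complex_of_real (cos t) * A + complex_of_real (sin t) * B)"
  unfolding tp_def
proof (rule exI[of _ "[((A - \<i>*B)/2, 1), ((A + \<i>*B)/2, -1)]"], rule ext)
  fix t
  show "complex_of_real (cos t) * A + complex_of_real (sin t) * B = ev [((A - \<i>*B)/2, 1), ((A + \<i>*B)/2, -1)] t"
  proof -
    have c1: "cis (of_int 1 * t) = cos t + \<i> * sin t" by (simp add: complex_eq_iff)
    have c2: "cis (of_int (-1) * t) = cos t - \<i> * sin t" by (simp add: complex_eq_iff)
    have "ev [((A - \<i>*B)/2, 1), ((A + \<i>*B)/2, -1)] t
        = (A - \<i>*B)/2 * (cos t + \<i> * sin t) + (A + \<i>*B)/2 * (cos t - \<i> * sin t)"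
      by (simp only: ev_Cons ev_Nil c1 c2 add_0_right)
    also have "\<dots> = complex_of_real (cos t) * A + complex_of_real (sin t) * B"
      by (simp add: field_simps)
    finally show ?thesis by simp
  qed
qed

lemma tp_poly: "real_polynomial_function p \<Longrightarrow> tp (\<lambda>t. complex_of_real (p (cis t)))"
proof (induction rule: real_polynomial_function.induct)
  case (linear f)
  interpret f: bounded_linear f by fact
  have fz: "f z = Re z * f 1 + Im z * f \<i>" for z
  proof -
    have "z = Re z *\<^sub>R 1 + Im z *\<^sub>R \<i>" by (simp add: complex_eq_iff)
    then have "f z = f (Re z *\<^sub>R 1 + Im z *\<^sub>R \<i>)" by simp
    also have "\<dots> = Re z * f 1 + Im z * f \<i>" by (simp only: f.add f.scaleR real_scaleR_def)
    finally show ?thesis .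
  qed
  have eq: "(\<lambda>t. complex_of_real (f (cis t))) = (\<lambda>t. complex_of_real (cos t) * of_real (f 1) + complex_of_real (sin t) * of_real (f \<i>))"
  proof (rule ext)
    fix t
    have "f (cis t) = cos t * f 1 + sin t * f \<i>" using fz[of "cis t"] by simp
    then show "complex_of_real (f (cis t)) = complex_of_real (cos t) * of_real (f 1) + complex_of_real (sin t) * of_real (f \<i>)" by simp
  qed
  show ?case unfolding eq by (rule tp_lin)
next
  case (const c) show ?case by (rule tp_const)
next
  case (add f g)
  have "tp (\<lambda>t. complex_of_real (f (cis t)) + complex_of_real (g (cis t)))" by (rule tp_add[OF add.IH])
  then show ?case by simp
next
  case (mult f g)
  have "tp (\<lambda>t. complex_of_real (f (cis t)) * complex_of_real (g (cis t)))" by (rule tp_mult[OF mult.IH])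
  then show ?case by simp
qed

lemma ev_int:
  assumes "in_Linfty \<phi>" "\<forall>j. fourier_coeff \<phi> j = 0"
  shows "integrable lborel (\<lambda>t. FF \<phi> t * ev xs t) \<and> (\<integral>t. FF \<phi> t * ev xs t \<partial>lborel) = 0"
proof (induction xs)
  case Nil then show ?case by simp
next
  case (Cons x xs)
  obtain a k where x: "x = (a,k)" by fastforce
  have eq: "(\<lambda>t. FF \<phi> t * ev (x#xs) t) = (\<lambda>t. a * (FF \<phi> t * cis (of_int k * t)) + FF \<phi> t * ev xs t)"
    by (auto simp: x algebra_simps)
  have i1: "integrable lborel (\<lambda>t. a * (FF \<phi> t * cis (of_int k * t)))"
    by (intro integrable_mult_right FF_cis_int assms)
  show ?case unfolding eq
    using Cons i1 coeff_zero_int[OF assms(2)] by simp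
qed

lemma tp_int:
  assumes "in_Linfty \<phi>" "\<forall>j. fourier_coeff \<phi> j = 0" "tp h"
  shows "(\<integral>t. FF \<phi> t * h t \<partial>lborel) = 0"
  using assms(3) ev_int[OF assms(1,2)] unfolding tp_def by auto



lemma cont_cis_comp:
  fixes u :: "complex \<Rightarrow> real"
  assumes "continuous_on (sphere 0 1) u"
  shows "(\<lambda>t. complex_of_real (u (cis t))) \<in> borel_measurable borel"
proof -
  have "continuous_on UNIV (\<lambda>t. u (cis t))"
    by (rule continuous_on_compose2[OF assms]) (auto intro!: continuous_intros)
  then have "continuous_on UNIV (\<lambda>t. complex_of_real (u (cis t)))"
    by (intro continuous_intros)
  then show ?thesis by (rule borel_measurable_continuous_onI)
qed

lemma cont_int:
  fixes u :: "complex \<Rightarrow> real"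
  assumes L: "in_Linfty \<phi>" and Z: "\<forall>j. fourier_coeff \<phi> j = 0"
    and u: "continuous_on (sphere 0 1) u"
  shows "(\<integral>t. FF \<phi> t * complex_of_real (u (cis t)) \<partial>lborel) = 0"
proof -
  define I where "I = (\<integral>t. norm (FF \<phi> t) \<partial>lborel)"
  have I0: "I \<ge> 0" unfolding I_def by simp
  have "compact (u ` sphere 0 1)"
    by (rule compact_continuous_image[OF u]) simp
  then obtain B where B: "\<And>z. z \<in> sphere 0 1 \<Longrightarrow> norm (u z) \<le> B"
    using compact_imp_bounded bounded_iff by (metis image_eqI)
  have iu: "integrable lborel (\<lambda>t. FF \<phi> t * complex_of_real (u (cis t)))"
    by (rule int_mult_bdd[OF FF_int[OF L] cont_cis_comp[OF u], where B=B]) (use B in auto)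
  let ?J = "\<integral>t. FF \<phi> t * complex_of_real (u (cis t)) \<partial>lborel"
  have key: "norm ?J \<le> e * I" if e: "e > 0" for e
  proof -
    obtain p where p: "real_polynomial_function p" and pe: "\<And>z. z \<in> sphere 0 1 \<Longrightarrow> \<bar>u z - p z\<bar> < e"
      using Stone_Weierstrass_real_polynomial_function[OF compact_sphere u e] by blast
    have pc: "continuous_on UNIV (\<lambda>t. p (cis t))"
    proof (rule continuous_on_compose2[of UNIV p UNIV cis])
      show "continuous_on UNIV p"
        by (intro continuous_at_imp_continuous_on ballI continuous_real_polymonial_function p)
    qed (auto intro!: continuous_intros)
    have dm: "(\<lambda>t. complex_of_real (u (cis t) - p (cis t))) \<in> borel_measurable borel"
      by (rule borel_measurable_continuous_onI)
         (intro continuous_intros pc continuous_on_compose2[OF u], auto)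
    have id: "integrable lborel (\<lambda>t. FF \<phi> t * complex_of_real (u (cis t) - p (cis t)))"
      by (rule int_mult_bdd[OF FF_int[OF L] dm, where B=e]) (use pe in \<open>auto simp del: of_real_diff simp: of_real_diff[symmetric] intro: less_imp_le\<close>)
    have ip: "integrable lborel (\<lambda>t. FF \<phi> t * complex_of_real (p (cis t)))"
    proof -
      have "(\<lambda>t. FF \<phi> t * complex_of_real (p (cis t))) = (\<lambda>t. FF \<phi> t * complex_of_real (u (cis t)) - FF \<phi> t * complex_of_real (u (cis t) - p (cis t)))"
        by (auto simp: algebra_simps)
      then show ?thesis using iu id by simp
    qed
    have p0: "(\<integral>t. FF \<phi> t * complex_of_real (p (cis t)) \<partial>lborel) = 0"
      by (rule tp_int[OF L Z tp_poly[OF p]])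
    have "?J = (\<integral>t. FF \<phi> t * complex_of_real (u (cis t) - p (cis t)) + FF \<phi> t * complex_of_real (p (cis t)) \<partial>lborel)"
      by (rule arg_cong[where f="integral\<^sup>L lborel"]) (auto simp: algebra_simps)
    also have "\<dots> = (\<integral>t. FF \<phi> t * complex_of_real (u (cis t) - p (cis t)) \<partial>lborel)"
      using id ip p0 by simp
    finally have J: "?J = (\<integral>t. FF \<phi> t * complex_of_real (u (cis t) - p (cis t)) \<partial>lborel)" .
    have "norm (\<integral>t. FF \<phi> t * complex_of_real (u (cis t) - p (cis t)) \<partial>lborel) \<le> (\<integral>t. norm (FF \<phi> t) * e \<partial>lborel)"
    proof (rule Bochner_Integration.integral_norm_bound_integral[OF id])
      show "integrable lborel (\<lambda>t. norm (FF \<phi> t) * e)"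
        by (intro integrable_mult_left integrable_norm FF_int L)
      fix t
      have "norm (FF \<phi> t * complex_of_real (u (cis t) - p (cis t))) = norm (FF \<phi> t) * \<bar>u (cis t) - p (cis t)\<bar>"
        by (simp only: norm_mult norm_of_real)
      also have "\<dots> \<le> norm (FF \<phi> t) * e"
        using pe[of "cis t"] by (intro mult_left_mono) auto
      finally show "norm (FF \<phi> t * complex_of_real (u (cis t) - p (cis t))) \<le> norm (FF \<phi> t) * e" .
    qed
    also have "\<dots> = e * I" unfolding I_def by simp
    finally show ?thesis using J by simp
  qed
  have "norm ?J \<le> 0"
  proof (rule field_le_epsilon)
    fix e :: real assume e: "e > 0"
    have "norm ?J \<le> (e / (I + 1)) * I" using key[of "e / (I+1)"] e I0 by simp
    also have "\<dots> \<le> e" using e I0 by (simp add: field_simps)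
    finally show "norm ?J \<le> 0 + e" by simp
  qed
  then show ?thesis by simp
qed



lemma arc_int:
  assumes L: "in_Linfty \<phi>" and Z: "\<forall>j. fourier_coeff \<phi> j = 0"
  shows "(\<integral>t. FF \<phi> t * indicator {t. s < cos (t - \<theta>)} t \<partial>lborel) = 0"
proof -
  define S where "S = {t. s < cos (t - \<theta>)}"
  define u where "u n z = max 0 (min 1 (real (Suc n) * (Re (z * cis (- \<theta>)) - s)))" for n :: nat and z :: complex
  have uc: "continuous_on (sphere 0 1) (u n)" for n
    unfolding u_def by (intro continuous_intros)
  have ucis: "u n (cis t) = max 0 (min 1 (real (Suc n) * (cos (t - \<theta>) - s)))" for n t
    by (simp add: u_def cis_mult)
  have Sopen: "open S" unfolding S_def
    by (intro open_Collect_less continuous_intros)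
  then have Sm[measurable]: "S \<in> sets borel" by simp
  have lim: "(\<lambda>n. FF \<phi> t * complex_of_real (u n (cis t))) \<longlonglongrightarrow> FF \<phi> t * indicator S t" for t
  proof (cases "t \<in> S")
    case True
    then have d: "cos (t - \<theta>) - s > 0" by (simp add: S_def)
    obtain N :: nat where N: "1 / (cos (t - \<theta>) - s) < real N" using reals_Archimedean2 by blast
    have "eventually (\<lambda>n. FF \<phi> t * complex_of_real (u n (cis t)) = FF \<phi> t * indicator S t) sequentially"
      unfolding eventually_sequentially
    proof (intro exI allI impI)
      fix n assume "n \<ge> N"
      then have "1 / (cos (t - \<theta>) - s) < real (Suc n)" using N by simp
      then have "1 \<le> real (Suc n) * (cos (t - \<theta>) - s)" using d by (simp add: field_simps)
      then show "FF \<phi> t * complex_of_real (u n (cis t)) = FF \<phi> t * indicator S t"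
        using True by (simp add: ucis)
    qed
    then show ?thesis by (rule tendsto_eventually)
  next
    case False
    then have d: "cos (t - \<theta>) - s \<le> 0" by (simp add: S_def)
    have "u n (cis t) = 0" for n
    proof -
      have "real (Suc n) * (cos (t - \<theta>) - s) \<le> 0" using d by (intro mult_nonneg_nonpos) auto
      then show ?thesis by (simp only: ucis)
    qed
    then show ?thesis using False by simp
  qed
  have "(\<lambda>n. \<integral>t. FF \<phi> t * complex_of_real (u n (cis t)) \<partial>lborel) \<longlonglongrightarrow> (\<integral>t. FF \<phi> t * indicator S t \<partial>lborel)"
  proof (rule integral_dominated_convergence[where w="\<lambda>t. norm (FF \<phi> t)"])
    show "(\<lambda>t. FF \<phi> t * indicator S t) \<in> borel_measurable lborel"
      using FF_meas[OF L] by measurable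
    show "(\<lambda>t. FF \<phi> t * complex_of_real (u n (cis t))) \<in> borel_measurable lborel" for n
      using FF_meas[OF L] cont_cis_comp[OF uc] by measurable
    show "integrable lborel (\<lambda>t. norm (FF \<phi> t))" by (intro integrable_norm FF_int L)
    show "AE t in lborel. (\<lambda>n. FF \<phi> t * complex_of_real (u n (cis t))) \<longlonglongrightarrow> FF \<phi> t * indicator S t"
      using lim by simp
    show "AE t in lborel. norm (FF \<phi> t * complex_of_real (u n (cis t))) \<le> norm (FF \<phi> t)" for n
    proof -
      have "norm (FF \<phi> t * complex_of_real (u n (cis t))) \<le> norm (FF \<phi> t)" for t
      proof -
        have "\<bar>u n (cis t)\<bar> \<le> 1" unfolding u_def by simp
        then have "norm (FF \<phi> t) * \<bar>u n (cis t)\<bar> \<le> norm (FF \<phi> t) * 1" by (intro mult_left_mono) auto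
        then show ?thesis by (simp only: norm_mult norm_of_real)
      qed
      then show ?thesis by simp
    qed
  qed
  moreover have "(\<lambda>n. \<integral>t. FF \<phi> t * complex_of_real (u n (cis t)) \<partial>lborel) = (\<lambda>n. 0)"
    using cont_int[OF L Z uc] by simp
  ultimately show ?thesis unfolding S_def using LIMSEQ_unique tendsto_const by metis
qed



lemma arc_set:
  fixes a t :: real
  assumes a: "0 < a" "a < 2*pi" and t: "0 \<le> t" "t \<le> 2*pi"
  defines "\<alpha> \<equiv> (2*pi - a) / 2"
  shows "cos \<alpha> < cos (t - (2*pi - \<alpha>)) \<longleftrightarrow> a < t \<and> t < 2*pi"
proof -
  define x where "x = t - (2*pi - \<alpha>)"
  have al: "0 < \<alpha>" "\<alpha> < pi" using a by (auto simp: \<alpha>_def)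
  have xr: "\<alpha> - 2*pi \<le> x" "x \<le> \<alpha>" using t by (auto simp: x_def)
  have iff: "a < t \<and> t < 2*pi \<longleftrightarrow> -\<alpha> < x \<and> x < \<alpha>" unfolding x_def \<alpha>_def by (auto simp: field_simps)
  show ?thesis unfolding x_def[symmetric] iff
  proof
    assume c: "cos \<alpha> < cos x"
    show "-\<alpha> < x \<and> x < \<alpha>"
    proof (rule ccontr)
      assume "\<not> (-\<alpha> < x \<and> x < \<alpha>)"
      then consider "x = \<alpha>" | "x \<le> -\<alpha>" using xr by linarith
      then show False
      proof cases
        case 1 then show False using c by simp
      next
        case 2
        define y where "y = x + 2*pi"
        have cy: "cos x = cos y" by (simp add: y_def)
        have yr: "\<alpha> \<le> y" "y \<le> 2*pi - \<alpha>" using 2 xr by (auto simp: y_def)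
        show False
        proof (cases "y \<le> pi")
          case True
          then have "cos y \<le> cos \<alpha>" using yr al by (subst cos_mono_le_eq) auto
          then show False using c cy by simp
        next
          case False
          have "cos y = cos (2*pi - y)" by simp
          also have "\<dots> \<le> cos \<alpha>" using yr al False by (subst cos_mono_le_eq) auto
          finally show False using c cy by simp
        qed
      qed
    qed
  next
    assume x: "-\<alpha> < x \<and> x < \<alpha>"
    have "cos \<alpha> < cos \<bar>x\<bar>" using x al by (subst cos_mono_less_eq) auto
    then show "cos \<alpha> < cos x" by simp
  qed
qed

lemma ray_int0:
  assumes L: "in_Linfty \<phi>" and Z: "\<forall>j. fourier_coeff \<phi> j = 0" and a: "0 < a" "a < 2*pi"
  shows "(\<integral>t. FF \<phi> t * indicator {a<..<2*pi} t \<partial>lborel) = 0"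
proof -
  define \<alpha> where "\<alpha> = (2*pi - a) / 2"
  have "(\<lambda>t. FF \<phi> t * indicator {a<..<2*pi} t) = (\<lambda>t. FF \<phi> t * indicator {t. cos \<alpha> < cos (t - (2*pi - \<alpha>))} t)"
  proof
    fix t
    show "FF \<phi> t * indicator {a<..<2*pi} t = FF \<phi> t * indicator {t. cos \<alpha> < cos (t - (2*pi - \<alpha>))} t"
    proof (cases "t \<in> {0..2*pi}")
      case True
      then show ?thesis using arc_set[OF a, of t] unfolding \<alpha>_def by (auto simp: indicator_def)
    next
      case False
      then show ?thesis by (simp add: FF_def)
    qed
  qed
  then show ?thesis using arc_int[OF L Z] by simp
qed

lemma ray_int:
  assumes L: "in_Linfty \<phi>" and Z: "\<forall>j. fourier_coeff \<phi> j = 0"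
  shows "(\<integral>t. FF \<phi> t * indicator {x<..} t \<partial>lborel) = 0"
proof -
  have F0: "(\<integral>t. FF \<phi> t \<partial>lborel) = 0"
    using coeff_zero_int[OF Z, of 0] by simp
  have m: "(\<lambda>t. FF \<phi> t * indicator {x<..} t) \<in> borel_measurable lborel"
    using FF_meas[OF L] by measurable
  consider "x < 0" | "x = 0" | "0 < x \<and> x < 2*pi" | "2*pi \<le> x" by linarith
  then show ?thesis
  proof cases
    case 1
    have "(\<lambda>t. FF \<phi> t * indicator {x<..} t) = FF \<phi>"
      using 1 by (auto simp: fun_eq_iff FF_def indicator_def)
    then show ?thesis using F0 by simp
  next
    case 2
    have "(\<integral>t. FF \<phi> t * indicator {x<..} t \<partial>lborel) = (\<integral>t. FF \<phi> t \<partial>lborel)"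
    proof (rule integral_cong_AE[OF m FF_meas[OF L]])
      show "AE t in lborel. FF \<phi> t * indicator {x<..} t = FF \<phi> t"
        using AE_lborel_singleton[of 0] by eventually_elim (use 2 in \<open>auto simp: FF_def indicator_def\<close>)
    qed
    then show ?thesis using F0 by simp
  next
    case 3
    have m2: "(\<lambda>t. FF \<phi> t * indicator {x<..<2*pi} t) \<in> borel_measurable lborel"
      using FF_meas[OF L] by measurable
    have "(\<integral>t. FF \<phi> t * indicator {x<..} t \<partial>lborel) = (\<integral>t. FF \<phi> t * indicator {x<..<2*pi} t \<partial>lborel)"
    proof (rule integral_cong_AE[OF m m2])
      show "AE t in lborel. FF \<phi> t * indicator {x<..} t = FF \<phi> t * indicator {x<..<2*pi} t"
        using AE_lborel_singleton[of "2*pi"] by eventually_elim (auto simp: FF_def indicator_def)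
    qed
    then show ?thesis using ray_int0[OF L Z] 3 by simp
  next
    case 4
    have "(\<lambda>t. FF \<phi> t * indicator {x<..} t) = (\<lambda>t. 0)"
      using 4 by (auto simp: fun_eq_iff FF_def indicator_def)
    then show ?thesis by simp
  qed
qed



lemma dens_ray:
  fixes h :: "real \<Rightarrow> real"
  assumes h: "integrable lborel h" and nn: "\<And>t. h t \<ge> 0"
  shows "emeasure (density lborel (\<lambda>t. ennreal (h t))) {x<..} = ennreal (\<integral>t. h t * indicator {x<..} t \<partial>lborel)"
proof -
  have hm[measurable]: "h \<in> borel_measurable lborel" using h by simp
  have "emeasure (density lborel (\<lambda>t. ennreal (h t))) {x<..} = (\<integral>\<^sup>+ t. ennreal (h t) * indicator {x<..} t \<partial>lborel)"
    by (rule emeasure_density) auto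
  also have "\<dots> = (\<integral>\<^sup>+ t. ennreal (h t * indicator {x<..} t) \<partial>lborel)"
    by (rule nn_integral_cong) (auto simp: indicator_def)
  also have "\<dots> = ennreal (\<integral>t. h t * indicator {x<..} t \<partial>lborel)"
    by (rule nn_integral_eq_integral) (auto intro!: integrable_real_mult_indicator h nn mult_nonneg_nonneg)
  finally show ?thesis .
qed

lemma rays_AE_zero:
  fixes g :: "real \<Rightarrow> real"
  assumes g: "integrable lborel g" and R: "\<And>x. (\<integral>t. g t * indicator {x<..} t \<partial>lborel) = 0"
  shows "AE t in lborel. g t = 0"
proof -
  define gp where "gp t = max 0 (g t)" for t
  define gn where "gn t = max 0 (- g t)" for t
  have gm[measurable]: "g \<in> borel_measurable lborel" using g by simp
  have ip: "integrable lborel gp" unfolding gp_def using g by auto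
  have in_: "integrable lborel gn" unfolding gn_def using g by auto
  have gpm[measurable]: "gp \<in> borel_measurable lborel" using ip by simp
  have gnm[measurable]: "gn \<in> borel_measurable lborel" using in_ by simp
  have eq: "(\<integral>t. gp t * indicator {x<..} t \<partial>lborel) = (\<integral>t. gn t * indicator {x<..} t \<partial>lborel)" for x
  proof -
    have "(\<lambda>t. g t * indicator {x<..} t) = (\<lambda>t. gp t * indicator {x<..} t - gn t * indicator {x<..} t)"
      by (auto simp: fun_eq_iff gp_def gn_def max_def)
    then have "0 = (\<integral>t. gp t * indicator {x<..} t - gn t * indicator {x<..} t \<partial>lborel)"
      using R[of x] by simp
    also have "\<dots> = (\<integral>t. gp t * indicator {x<..} t \<partial>lborel) - (\<integral>t. gn t * indicator {x<..} t \<partial>lborel)"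
      by (rule Bochner_Integration.integral_diff) (auto intro!: integrable_real_mult_indicator ip in_)
    finally show ?thesis by simp
  qed
  have "density lborel (\<lambda>t. ennreal (gp t)) = density lborel (\<lambda>t. ennreal (gn t))"
  proof (rule measure_eqI_lessThan)
    show "sets (density lborel (\<lambda>t. ennreal (gp t))) = sets borel" by simp
    show "sets (density lborel (\<lambda>t. ennreal (gn t))) = sets borel" by simp
    fix x
    show "emeasure (density lborel (\<lambda>t. ennreal (gp t))) {x<..} < \<infinity>"
      using dens_ray[OF ip, of x] by (simp add: gp_def)
    show "emeasure (density lborel (\<lambda>t. ennreal (gp t))) {x<..} = emeasure (density lborel (\<lambda>t. ennreal (gn t))) {x<..}"
      using dens_ray[OF ip, of x] dens_ray[OF in_, of x] eq[of x] by (simp add: gp_def gn_def)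
  qed
  then have "AE t in lborel. ennreal (gp t) = ennreal (gn t)"
    by (intro sigma_finite_measure.density_unique[OF sigma_finite_lborel]) auto
  then show ?thesis
    by eventually_elim (auto simp: gp_def gn_def max_def split: if_splits)
qed



lemma coeff_zero_imp:
  assumes L: "in_Linfty \<phi>" and Z: "\<forall>j. fourier_coeff \<phi> j = 0"
  shows "Linfty_zero \<phi>"
proof -
  have ii: "integrable lborel (\<lambda>t. FF \<phi> t * indicator {x<..} t)" for x
    by (rule int_mult_bdd[OF FF_int[OF L], where B=1]) (auto simp: indicator_def)
  have re: "AE t in lborel. Re (FF \<phi> t) = 0"
  proof (rule rays_AE_zero)
    show "integrable lborel (\<lambda>t. Re (FF \<phi> t))" by (intro integrable_Re FF_int L)
    fix x
    have "(\<integral>t. Re (FF \<phi> t) * indicator {x<..} t \<partial>lborel) = (\<integral>t. Re (FF \<phi> t * indicator {x<..} t) \<partial>lborel)"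
      by (rule arg_cong[where f="integral\<^sup>L lborel"]) (auto simp: indicator_def)
    also have "\<dots> = Re (\<integral>t. FF \<phi> t * indicator {x<..} t \<partial>lborel)" by (rule integral_Re[OF ii])
    also have "\<dots> = 0" using ray_int[OF L Z] by simp
    finally show "(\<integral>t. Re (FF \<phi> t) * indicator {x<..} t \<partial>lborel) = 0" .
  qed
  have im: "AE t in lborel. Im (FF \<phi> t) = 0"
  proof (rule rays_AE_zero)
    show "integrable lborel (\<lambda>t. Im (FF \<phi> t))" by (intro integrable_Im FF_int L)
    fix x
    have "(\<integral>t. Im (FF \<phi> t) * indicator {x<..} t \<partial>lborel) = (\<integral>t. Im (FF \<phi> t * indicator {x<..} t) \<partial>lborel)"
      by (rule arg_cong[where f="integral\<^sup>L lborel"]) (auto simp: indicator_def)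
    also have "\<dots> = Im (\<integral>t. FF \<phi> t * indicator {x<..} t \<partial>lborel)" by (rule integral_Im[OF ii])
    also have "\<dots> = 0" using ray_int[OF L Z] by simp
    finally show "(\<integral>t. Im (FF \<phi> t) * indicator {x<..} t \<partial>lborel) = 0" .
  qed
  from re im show ?thesis unfolding Linfty_zero_def
    by eventually_elim (auto simp: FF_def complex_eq_iff)
qed

theorem mainTheorem6:
  fixes \<phi> :: "complex \<Rightarrow> complex"
  assumes "in_Linfty \<phi>"
  shows "hilbert_schmidt_H2 (slant_HToeplitz \<phi>) \<longleftrightarrow> Linfty_zero \<phi>"
  unfolding HS_iff_coeff using coeff_zero_imp[OF assms] zero_coeff by blast

end
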